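(* Let $H=(V,E)$ be an undirected graph, $s,t\in V$, and $\ell$ a positive integer. Then $\lambda_{H\setminus C}(s,t)\ge 2(\ell-|C|)$ holds for every $C\subseteq V\setminus\{s,t\}$ with $|C|<\ell$ if and only if $H$ contains $2\ell$ pairwise edge-disjoint $st$-paths such that every node $v\in V\setminus\{s,t\}$ belongs to at most $2$ of them.
   Context: $\lambda_{F}(s,t)$ denotes the maximum number of pairwise edge-disjoint $st$-paths in a graph $F$; $H\setminus C$ is the graph obtained from $H$ by deleting the nodes of $C$ (and their incident edges). *)

theory Defs
  imports Main "HOL-Library.Extended_Nat"
begin

text \<open>Finite undirected multigraph: vertex set V, edge (identifier) set E, and
  an endpoint map ends assigning to each edge its set of one or two endpoints.\<close>

definition graph :: "'v set \<Rightarrow> 'e set \<Rightarrow> ('e \<Rightarrow> 'v set) \<Rightarrow> bool" where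
  "graph V E ends \<longleftrightarrow> finite V \<and> finite E \<and>
     (\<forall>e\<in>E. ends e \<noteq> {} \<and> card (ends e) \<le> 2 \<and> ends e \<subseteq> V)"

definition is_path :: "'v set \<Rightarrow> 'e set \<Rightarrow> ('e \<Rightarrow> 'v set) \<Rightarrow> 'v \<Rightarrow> 'v
                       \<Rightarrow> 'v list \<times> 'e list \<Rightarrow> bool" where
  "is_path V E ends s t p \<longleftrightarrow>
     (let vs = fst p; es = snd p in
       length vs = Suc (length es) \<and> distinct vs \<and> set vs \<subseteq> V \<and>
       hd vs = s \<and> last vs = t \<and>
       (\<forall>i < length es. es ! i \<in> E \<and> ends (es ! i) = {vs ! i, vs ! Suc i}))"

definition edge_disjoint_paths :: "'v set \<Rightarrow> 'e set \<Rightarrow> ('e \<Rightarrow> 'v set) \<Rightarrow> 'v \<Rightarrow> 'v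
        \<Rightarrow> nat \<Rightarrow> (nat \<Rightarrow> 'v list \<times> 'e list) \<Rightarrow> bool" where
  "edge_disjoint_paths V E ends s t k P \<longleftrightarrow>
     (\<forall>i<k. is_path V E ends s t (P i)) \<and>
     (\<forall>i<k. \<forall>j<k. i \<noteq> j \<longrightarrow> set (snd (P i)) \<inter> set (snd (P j)) = {})"

text \<open>lambda_F(s,t): maximum number of pairwise edge-disjoint st-paths
  (as an extended natural, which is infinite only in the degenerate case s = t).\<close>

definition lambda :: "'v set \<Rightarrow> 'e set \<Rightarrow> ('e \<Rightarrow> 'v set) \<Rightarrow> 'v \<Rightarrow> 'v \<Rightarrow> enat" where
  "lambda V E ends s t = Sup {enat k | k. \<exists>P. edge_disjoint_paths V E ends s t k P}"

definition del_verts_V :: "'v set \<Rightarrow> 'v set \<Rightarrow> 'v set" where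
  "del_verts_V V C = V - C"

definition del_verts_E :: "'e set \<Rightarrow> ('e \<Rightarrow> 'v set) \<Rightarrow> 'v set \<Rightarrow> 'e set" where
  "del_verts_E E ends C = {e \<in> E. ends e \<inter> C = {}}"

end

theory Submission
  imports Defs
begin


fun walk :: "('x \<Rightarrow> 'n) \<Rightarrow> ('x \<Rightarrow> 'n) \<Rightarrow> 'n \<Rightarrow> 'x list \<Rightarrow> 'n \<Rightarrow> bool" where
  "walk tf hf x [] y = (x = y)"
| "walk tf hf x (a # as) y = (tf a = x \<and> walk tf hf (hf a) as y)"

lemma walk_append:
  "walk tf hf x as y \<Longrightarrow> walk tf hf y bs z \<Longrightarrow> walk tf hf x (as @ bs) z"
  by (induction as arbitrary: x) auto

lemma walk_snoc:
  "walk tf hf x as y \<Longrightarrow> tf a = y \<Longrightarrow> walk tf hf x (as @ [a]) (hf a)"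
  using walk_append[of tf hf x as y "[a]" "hf a"] by simp

lemma walk_split:
  "walk tf hf x as y \<Longrightarrow> i \<le> length as \<Longrightarrow>
    walk tf hf x (take i as) ((x # map hf as) ! i) \<and> walk tf hf ((x # map hf as) ! i) (drop i as) y"
proof (induction as arbitrary: x i)
  case Nil
  then show ?case by simp
next
  case (Cons a as)
  show ?case
  proof (cases i)
    case 0
    then show ?thesis using Cons.prems by simp
  next
    case (Suc j)
    then show ?thesis using Cons.prems Cons.IH[of "hf a" j] by simp
  qed
qed

lemma walk_shorten:
  assumes "walk tf hf x as y" "\<not> distinct (x # map hf as)"
  shows "\<exists>bs. walk tf hf x bs y \<and> set bs \<subseteq> set as \<and> length bs < length as"
proof -
  let ?ns = "x # map hf as"
  obtain i0 j0 where ij0: "i0 < length ?ns" "j0 < length ?ns" "i0 \<noteq> j0" "?ns ! i0 = ?ns ! j0"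
    using assms(2) unfolding distinct_conv_nth by blast
  obtain i j where ij: "i < j" "j < length ?ns" "?ns ! i = ?ns ! j"
  proof (cases "i0 < j0")
    case True
    then show ?thesis using that ij0 by blast
  next
    case False
    then have "j0 < i0" using ij0(3) by linarith
    then show ?thesis using that[of j0 i0] ij0 by simp
  qed
  have j: "j \<le> length as" using ij by simp
  have i: "i \<le> length as" using ij j by linarith
  have 1: "walk tf hf x (take i as) (?ns ! i)" using conjunct1[OF walk_split[OF assms(1) i]] .
  have 2: "walk tf hf (?ns ! j) (drop j as) y" using conjunct2[OF walk_split[OF assms(1) j]] .
  have 3: "walk tf hf (?ns ! i) (drop j as) y" using 2 unfolding ij(3) .
  have "walk tf hf x (take i as @ drop j as) y" using walk_append[OF 1 3] .
  moreover have "set (take i as @ drop j as) \<subseteq> set as"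
    using set_take_subset[of i as] set_drop_subset[of j as] by auto
  moreover have "length (take i as @ drop j as) < length as" using ij j by simp
  ultimately show ?thesis by blast
qed

lemma walk_simple:
  "walk tf hf x as y \<Longrightarrow> \<exists>bs. walk tf hf x bs y \<and> set bs \<subseteq> set as \<and> distinct (x # map hf bs)"
proof (induction "length as" arbitrary: as rule: less_induct)
  case less
  show ?case
  proof (cases "distinct (x # map hf as)")
    case True
    then show ?thesis using less.prems by blast
  next
    case False
    then obtain bs where "walk tf hf x bs y" "set bs \<subseteq> set as" "length bs < length as"
      using walk_shorten[OF less.prems] by blast
    then show ?thesis using less.hyps[of bs] by (meson order_trans)
  qed
qed

lemma walk_last: "walk tf hf x (qs @ [p]) y \<Longrightarrow> hf p = y"
  by (induction qs arbitrary: x) auto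

lemma walk_next:
  "walk tf hf x as y \<Longrightarrow> z \<in> hf ` set as \<Longrightarrow> z \<noteq> y \<Longrightarrow> \<exists>a\<in>set as. tf a = z"
proof (induction as arbitrary: x)
  case Nil
  then show ?case by simp
next
  case (Cons a as)
  show ?case
  proof (cases "z = hf a")
    case True
    then have "as \<noteq> []" using Cons.prems by auto
    then obtain b bs where "as = b # bs" by (cases as) auto
    then show ?thesis using Cons.prems True by auto
  next
    case False
    then show ?thesis using Cons by auto
  qed
qed


fun rtf :: "('a \<Rightarrow> 'n) \<Rightarrow> ('a \<Rightarrow> 'n) \<Rightarrow> 'a \<times> bool \<Rightarrow> 'n" where
  "rtf tf hf (a, d) = (if d then tf a else hf a)"
fun rhf :: "('a \<Rightarrow> 'n) \<Rightarrow> ('a \<Rightarrow> 'n) \<Rightarrow> 'a \<times> bool \<Rightarrow> 'n" where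
  "rhf tf hf (a, d) = (if d then hf a else tf a)"

fun pv :: "('a \<times> bool) list \<Rightarrow> 'a \<Rightarrow> int" where
  "pv [] a = 0"
| "pv (p # ps) a = (if fst p = a then (if snd p then 1 else -1) else 0) + pv ps a"

lemma pv_distinct:
  "distinct ps \<Longrightarrow> pv ps a = of_bool ((a, True) \<in> set ps) - of_bool ((a, False) \<in> set ps)"
proof (induction ps)
  case Nil
  then show ?case by simp
next
  case (Cons p ps)
  obtain b d where p: "p = (b, d)" by (cases p)
  show ?case using Cons p by (cases d) auto
qed

lemma pv_fwd: "distinct as \<Longrightarrow> pv (map (\<lambda>a. (a, True)) as) a = of_bool (a \<in> set as)"
  by (subst pv_distinct) (auto simp: distinct_map inj_on_def)

lemma walk_fwd: "walk tf hf x as y \<Longrightarrow> walk (rtf tf hf) (rhf tf hf) x (map (\<lambda>a. (a, True)) as) y"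
  by (induction as arbitrary: x) auto

locale dg =
  fixes Arcs :: "'a set" and tf hf :: "'a \<Rightarrow> 'n" and s t :: 'n
  assumes fin: "finite Arcs" and st: "s \<noteq> t"
begin

definition ex :: "('a \<Rightarrow> int) \<Rightarrow> 'n \<Rightarrow> int" where
  "ex f n = (\<Sum>a\<in>Arcs. f a * (of_bool (hf a = n) - of_bool (tf a = n)))"

definition isflow :: "('a \<Rightarrow> int) \<Rightarrow> bool" where
  "isflow f \<longleftrightarrow> (\<forall>a. f a = 0 \<or> f a = 1) \<and> (\<forall>a. a \<notin> Arcs \<longrightarrow> f a = 0) \<and>
     (\<forall>n. n \<noteq> s \<and> n \<noteq> t \<longrightarrow> ex f n = 0)"

definition val :: "('a \<Rightarrow> int) \<Rightarrow> int" where
  "val f = - ex f s"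

definition cutset :: "'n set \<Rightarrow> 'a set" where
  "cutset S = {a \<in> Arcs. tf a \<in> S \<and> hf a \<notin> S}"

definition res :: "('a \<Rightarrow> int) \<Rightarrow> ('a \<times> bool) set" where
  "res f = {(a, True) | a. a \<in> Arcs \<and> f a = 0} \<union> {(a, False) | a. a \<in> Arcs \<and> f a = 1}"

lemma ex_add: "ex (\<lambda>a. f a + g a) n = ex f n + ex g n"
  unfolding ex_def by (simp add: sum.distrib distrib_right)

lemma ex_diff: "ex (\<lambda>a. f a - g a) n = ex f n - ex g n"
  unfolding ex_def by (simp add: sum_subtractf left_diff_distrib)

lemma ex_single:
  assumes "fst p \<in> Arcs"
  shows "ex (\<lambda>a. if fst p = a then (if snd p then 1 else -1) else 0) n
     = of_bool (rhf tf hf p = n) - of_bool (rtf tf hf p = n)"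
proof -
  obtain b d where p: "p = (b, d)" by (cases p)
  have "ex (\<lambda>a. if fst p = a then (if snd p then 1 else -1) else 0) n
     = (\<Sum>a\<in>Arcs. if a = b then (if d then 1 else -1) * (of_bool (hf b = n) - of_bool (tf b = n)) else 0)"
    unfolding ex_def p by (intro sum.cong) auto
  also have "\<dots> = (if d then 1 else -1) * (of_bool (hf b = n) - of_bool (tf b = n))"
  proof -
    have "\<And>C::int. (\<Sum>a\<in>Arcs. if a = b then C else 0) = C"
      using assms p fin by (simp add: sum.delta)
    then show ?thesis by blast
  qed
  finally show ?thesis using p by (cases d) auto
qed

lemma ex_pv:
  "walk (rtf tf hf) (rhf tf hf) x ps y \<Longrightarrow> fst ` set ps \<subseteq> Arcs \<Longrightarrow>
   ex (pv ps) n = of_bool (n = y) - of_bool (n = x)"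
proof (induction ps arbitrary: x)
  case Nil
  then show ?case by (simp add: ex_def)
next
  case (Cons p ps)
  have e: "pv (p # ps) = (\<lambda>a. (if fst p = a then (if snd p then 1 else -1) else 0) + pv ps a)"
    by auto
  have "ex (pv (p # ps)) n = (of_bool (rhf tf hf p = n) - of_bool (rtf tf hf p = n)) + ex (pv ps) n"
    unfolding e ex_add using ex_single Cons.prems by auto
  also have "\<dots> = of_bool (n = y) - of_bool (n = x)"
    using Cons by auto
  finally show ?case .
qed

lemma sum_ex:
  assumes "finite S"
  shows "(\<Sum>n\<in>S. ex f n) = (\<Sum>a\<in>Arcs. f a * (of_bool (hf a \<in> S) - of_bool (tf a \<in> S)))"
proof -
  have "(\<Sum>n\<in>S. ex f n) = (\<Sum>a\<in>Arcs. \<Sum>n\<in>S. f a * (of_bool (hf a = n) - of_bool (tf a = n)))"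
    unfolding ex_def by (rule sum.swap)
  also have "\<dots> = (\<Sum>a\<in>Arcs. f a * (of_bool (hf a \<in> S) - of_bool (tf a \<in> S)))"
  proof (rule sum.cong)
    fix a
    have 1: "(\<Sum>n\<in>S. (of_bool (hf a = n) :: int)) = of_bool (hf a \<in> S)"
      using assms by (simp add: of_bool_def sum.delta)
    have 2: "(\<Sum>n\<in>S. (of_bool (tf a = n) :: int)) = of_bool (tf a \<in> S)"
      using assms by (simp add: of_bool_def sum.delta)
    show "(\<Sum>n\<in>S. f a * (of_bool (hf a = n) - of_bool (tf a = n))) = f a * (of_bool (hf a \<in> S) - of_bool (tf a \<in> S))"
      by (simp add: sum_distrib_left[symmetric] sum_subtractf 1 2)
  qed simp
  finally show ?thesis .
qed

end


context dg
begin

lemma isflow_Arcs: "isflow f \<Longrightarrow> f a \<noteq> 0 \<Longrightarrow> a \<in> Arcs"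
  unfolding isflow_def by blast

lemma res_iff: "(a, d) \<in> res f \<longleftrightarrow> a \<in> Arcs \<and> (if d then f a = 0 else f a = 1)"
  unfolding res_def by (cases d) auto

lemma res_Arcs: "fst ` res f \<subseteq> Arcs"
  using res_iff by force

lemma augment:
  assumes f: "isflow f" and w: "walk (rtf tf hf) (rhf tf hf) s ps t"
    and r: "set ps \<subseteq> res f" and d: "distinct ps"
  shows "isflow (\<lambda>a. f a + pv ps a) \<and> val (\<lambda>a. f a + pv ps a) = val f + 1"
proof -
  have A: "fst ` set ps \<subseteq> Arcs" using r res_Arcs by blast
  have exn: "ex (\<lambda>a. f a + pv ps a) n = ex f n + of_bool (n = t) - of_bool (n = s)" for n
    using ex_add ex_pv[OF w A] by simp
  have vals: "f a + pv ps a = 0 \<or> f a + pv ps a = 1" for a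
  proof -
    have pa: "pv ps a = of_bool ((a, True) \<in> set ps) - of_bool ((a, False) \<in> set ps)"
      using pv_distinct[OF d] .
    show ?thesis
    proof (cases "(a, True) \<in> set ps")
      case True
      then have "(a, True) \<in> res f" using r by blast
      then have "f a = 0" unfolding res_iff by simp
      then have "(a, False) \<notin> res f" unfolding res_iff by simp
      then have "(a, False) \<notin> set ps" using r by blast
      then show ?thesis using pa True \<open>f a = 0\<close> by simp
    next
      case False
      show ?thesis
      proof (cases "(a, False) \<in> set ps")
        case True
        then have "(a, False) \<in> res f" using r by blast
        then have "f a = 1" unfolding res_iff by simp
        then show ?thesis using pa True False by simp
      next
        case F2: False
        then show ?thesis using pa False f unfolding isflow_def by simp
      qed
    qed
  qed
  have out: "a \<notin> Arcs \<Longrightarrow> f a + pv ps a = 0" for a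
  proof -
    assume a: "a \<notin> Arcs"
    have "(a, True) \<notin> set ps" "(a, False) \<notin> set ps"
      using A a unfolding image_subset_iff by fastforce+
    then show ?thesis using pv_distinct[OF d, of a] f a unfolding isflow_def by simp
  qed
  show ?thesis
    unfolding isflow_def val_def using vals out exn f st unfolding isflow_def by auto
qed

lemma finite_flows: "finite {f. isflow f}"
proof -
  have "{f. isflow f} \<subseteq> (\<lambda>B a. if a \<in> B then 1 else 0) ` Pow Arcs"
  proof
    fix f assume "f \<in> {f. isflow f}"
    then have f: "isflow f" by simp
    have "f = (\<lambda>a. if a \<in> {a \<in> Arcs. f a = 1} then 1 else 0)"
    proof
      fix a show "f a = (if a \<in> {a \<in> Arcs. f a = 1} then 1 else 0)"
        using f unfolding isflow_def by (cases "f a = 1") auto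
    qed
    then show "f \<in> (\<lambda>B a. if a \<in> B then 1 else 0) ` Pow Arcs" by blast
  qed
  moreover have "finite ((\<lambda>B a. if a \<in> B then (1::int) else 0) ` Pow Arcs)" using fin by simp
  ultimately show ?thesis by (rule finite_subset)
qed

lemma zero_flow: "isflow (\<lambda>_. 0)"
  unfolding isflow_def ex_def by simp

lemma max_flow: "\<exists>f. isflow f \<and> (\<forall>g. isflow g \<longrightarrow> val g \<le> val f)"
proof -
  let ?F = "{f. isflow f}"
  have "finite (val ` ?F)" using finite_flows by simp
  moreover have "val ` ?F \<noteq> {}" using zero_flow by blast
  ultimately have "Max (val ` ?F) \<in> val ` ?F" by (rule Max_in)
  then obtain f where f: "isflow f" "val f = Max (val ` ?F)" by auto
  have "\<forall>g. isflow g \<longrightarrow> val g \<le> val f"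
    using f(2) \<open>finite (val ` ?F)\<close> by auto
  then show ?thesis using f(1) by blast
qed

lemma cut_lemma:
  assumes f: "isflow f"
    and nw: "\<not> (\<exists>ps. walk (rtf tf hf) (rhf tf hf) s ps t \<and> set ps \<subseteq> res f)"
  shows "\<exists>S. s \<in> S \<and> t \<notin> S \<and> val f = int (card (cutset S))"
proof -
  define S where "S = {n. \<exists>ps. walk (rtf tf hf) (rhf tf hf) s ps n \<and> set ps \<subseteq> res f}"
  have sS: "s \<in> S" unfolding S_def by (rule CollectI, rule exI[of _ "[]"]) simp
  have tS: "t \<notin> S" using nw unfolding S_def by blast
  have ext: "n \<in> S \<Longrightarrow> p \<in> res f \<Longrightarrow> rtf tf hf p = n \<Longrightarrow> rhf tf hf p \<in> S" for n p
  proof -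
    assume "n \<in> S" "p \<in> res f" "rtf tf hf p = n"
    then obtain ps where "walk (rtf tf hf) (rhf tf hf) s ps n" "set ps \<subseteq> res f"
      unfolding S_def by blast
    moreover have "walk (rtf tf hf) (rhf tf hf) s (ps @ [p]) (rhf tf hf p)"
      using walk_snoc[of "rtf tf hf" "rhf tf hf" s ps n p] calculation(1) \<open>rtf tf hf p = n\<close> by blast
    moreover have "set (ps @ [p]) \<subseteq> res f" using calculation(2) \<open>p \<in> res f\<close> by simp
    ultimately show ?thesis unfolding S_def by blast
  qed
  have Ssub: "S \<subseteq> {s} \<union> tf ` Arcs \<union> hf ` Arcs"
  proof
    fix n assume "n \<in> S"
    then obtain ps where w: "walk (rtf tf hf) (rhf tf hf) s ps n" "set ps \<subseteq> res f"
      unfolding S_def by blast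
    show "n \<in> {s} \<union> tf ` Arcs \<union> hf ` Arcs"
    proof (cases "ps = []")
      case True
      then show ?thesis using w by simp
    next
      case False
      then obtain qs p where ps: "ps = qs @ [p]" by (metis rev_exhaust)
      have "p \<in> res f" using w ps by auto
      moreover have "rhf tf hf p = n" using w(1) unfolding ps by (rule walk_last)
      moreover obtain b d where "p = (b, d)" by (cases p)
      ultimately show ?thesis by (cases d) (auto simp: res_iff)
    qed
  qed
  have finS: "finite S" using finite_subset[OF Ssub] fin by blast
  have trm: "f a * (of_bool (hf a \<in> S) - of_bool (tf a \<in> S)) = - of_bool (a \<in> cutset S)"
    if a: "a \<in> Arcs" for a
  proof -
    have 1: "tf a \<in> S \<Longrightarrow> hf a \<notin> S \<Longrightarrow> f a = 1"
    proof (rule ccontr)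
      assume "tf a \<in> S" "hf a \<notin> S" "f a \<noteq> 1"
      then have "f a = 0" using f isflow_def by blast
      then have "(a, True) \<in> res f" using a unfolding res_iff by simp
      then show False using ext[of "tf a" "(a, True)"] \<open>tf a \<in> S\<close> \<open>hf a \<notin> S\<close> by simp
    qed
    have 2: "hf a \<in> S \<Longrightarrow> tf a \<notin> S \<Longrightarrow> f a = 0"
    proof (rule ccontr)
      assume "hf a \<in> S" "tf a \<notin> S" "f a \<noteq> 0"
      then have "f a = 1" using f isflow_def by blast
      then have "(a, False) \<in> res f" using a unfolding res_iff by simp
      then show False using ext[of "hf a" "(a, False)"] \<open>hf a \<in> S\<close> \<open>tf a \<notin> S\<close> by simp
    qed
    show ?thesis using 1 2 a unfolding cutset_def by auto
  qed
  have E1: "(\<Sum>n\<in>S. ex f n) = ex f s"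
  proof -
    have "(\<Sum>n\<in>S. ex f n) = ex f s + (\<Sum>n\<in>S - {s}. ex f n)"
      using finS sS by (simp add: sum.remove)
    also have "(\<Sum>n\<in>S - {s}. ex f n) = 0"
      using f tS unfolding isflow_def by (intro sum.neutral) auto
    finally show ?thesis by simp
  qed
  have "(\<Sum>n\<in>S. ex f n) = (\<Sum>a\<in>Arcs. - of_bool (a \<in> cutset S))"
    unfolding sum_ex[OF finS] using trm by (intro sum.cong) auto
  also have "\<dots> = - int (card (cutset S))"
  proof -
    have "(\<Sum>a\<in>Arcs. (of_bool (a \<in> cutset S) :: int)) = int (card (cutset S))"
    proof -
      have "Arcs \<inter> {a. a \<in> cutset S} = cutset S" unfolding cutset_def by blast
      then show ?thesis using fin sum_of_bool_eq[OF fin, of "\<lambda>a. a \<in> cutset S"] by simp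
    qed
    then show ?thesis by (simp add: sum_negf)
  qed
  finally have "ex f s = - int (card (cutset S))" using E1 by simp
  then show ?thesis using sS tS unfolding val_def by auto
qed

theorem maxflow_mincut:
  assumes "\<And>S. s \<in> S \<Longrightarrow> t \<notin> S \<Longrightarrow> k \<le> card (cutset S)"
  shows "\<exists>f. isflow f \<and> int k \<le> val f"
proof -
  obtain f where f: "isflow f" "\<forall>g. isflow g \<longrightarrow> val g \<le> val f" using max_flow by blast
  show ?thesis
  proof (cases "\<exists>ps. walk (rtf tf hf) (rhf tf hf) s ps t \<and> set ps \<subseteq> res f")
    case True
    then obtain ps where ps: "walk (rtf tf hf) (rhf tf hf) s ps t" "set ps \<subseteq> res f" by blast
    then obtain qs where qs: "walk (rtf tf hf) (rhf tf hf) s qs t" "set qs \<subseteq> set ps"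
      "distinct (s # map (rhf tf hf) qs)"
      using walk_simple[OF ps(1)] by blast
    have "distinct qs" using qs(3) by (simp add: distinct_map)
    moreover have "set qs \<subseteq> res f" using qs(2) ps(2) by blast
    ultimately have aug: "isflow (\<lambda>a. f a + pv qs a) \<and> val (\<lambda>a. f a + pv qs a) = val f + 1"
      using augment[OF f(1) qs(1)] by blast
    then have "val (\<lambda>a. f a + pv qs a) \<le> val f" using f(2) by blast
    then show ?thesis using aug by linarith
  next
    case False
    then obtain S where "s \<in> S" "t \<notin> S" "val f = int (card (cutset S))"
      using cut_lemma[OF f(1)] by blast
    then have "k \<le> card (cutset S)" using assms by blast
    then show ?thesis using f(1) \<open>val f = _\<close> by (intro exI[of _ f]) simp
  qed
qed

end


context dg
begin

lemma supp_walk_exists: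
  assumes f: "isflow f" and v: "val f > 0"
  shows "\<exists>as. walk tf hf s as t \<and> set as \<subseteq> {a. f a = 1}"
proof (rule ccontr)
  assume nw: "\<not> ?thesis"
  define R where "R = {n. \<exists>as. walk tf hf s as n \<and> set as \<subseteq> {a. f a = 1}}"
  have sR: "s \<in> R" unfolding R_def by (rule CollectI, rule exI[of _ "[]"]) simp
  have tR: "t \<notin> R" using nw unfolding R_def by blast
  have ext: "n \<in> R \<Longrightarrow> f a = 1 \<Longrightarrow> tf a = n \<Longrightarrow> hf a \<in> R" for n a
  proof -
    assume "n \<in> R" "f a = 1" "tf a = n"
    then obtain as where "walk tf hf s as n" "set as \<subseteq> {a. f a = 1}"
      unfolding R_def by blast
    moreover have "walk tf hf s (as @ [a]) (hf a)"
      using walk_snoc[of tf hf s as n a] calculation(1) \<open>tf a = n\<close> by blast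
    moreover have "set (as @ [a]) \<subseteq> {a. f a = 1}" using calculation(2) \<open>f a = 1\<close> by simp
    ultimately show ?thesis unfolding R_def by blast
  qed
  have Rsub: "R \<subseteq> {s} \<union> hf ` Arcs"
  proof
    fix n assume "n \<in> R"
    then obtain as where w: "walk tf hf s as n" "set as \<subseteq> {a. f a = 1}"
      unfolding R_def by blast
    show "n \<in> {s} \<union> hf ` Arcs"
    proof (cases "as = []")
      case True
      then show ?thesis using w by simp
    next
      case False
      then obtain qs a where as: "as = qs @ [a]" by (metis rev_exhaust)
      have "f a = 1" using w as by auto
      then have "a \<in> Arcs" using isflow_Arcs[OF f] by simp
      moreover have "hf a = n" using w(1) unfolding as by (rule walk_last)
      ultimately show ?thesis by blast
    qed
  qed
  have finR: "finite R" using finite_subset[OF Rsub] fin by blast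
  have E1: "(\<Sum>n\<in>R. ex f n) = ex f s"
  proof -
    have "(\<Sum>n\<in>R. ex f n) = ex f s + (\<Sum>n\<in>R - {s}. ex f n)"
      using finR sR by (simp add: sum.remove)
    also have "(\<Sum>n\<in>R - {s}. ex f n) = 0"
      using f tR unfolding isflow_def by (intro sum.neutral) auto
    finally show ?thesis by simp
  qed
  have "(\<Sum>n\<in>R. ex f n) \<ge> 0"
    unfolding sum_ex[OF finR]
  proof (rule sum_nonneg)
    fix a assume "a \<in> Arcs"
    show "0 \<le> f a * (of_bool (hf a \<in> R) - of_bool (tf a \<in> R))"
    proof (cases "f a = 1")
      case True
      then show ?thesis using ext[of "tf a" a] by (cases "tf a \<in> R") auto
    next
      case False
      then have "f a = 0" using f isflow_def by blast
      then show ?thesis by simp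
    qed
  qed
  then show False using E1 v unfolding val_def by simp
qed

lemma decompose:
  "isflow f \<Longrightarrow> val f = int m \<Longrightarrow>
   \<exists>W. (\<forall>i<m. walk tf hf s (W i) t \<and> distinct (s # map hf (W i)) \<and> set (W i) \<subseteq> {a. f a = 1}) \<and>
       (\<forall>i<m. \<forall>j<m. i \<noteq> j \<longrightarrow> set (W i) \<inter> set (W j) = {})"
proof (induction m arbitrary: f)
  case 0
  then show ?case by (intro exI[of _ "\<lambda>_. []"]) simp
next
  case (Suc m)
  have f: "isflow f" by fact
  obtain as where as: "walk tf hf s as t" "set as \<subseteq> {a. f a = 1}"
    using supp_walk_exists[OF f] Suc.prems(2) by auto
  obtain bs where bs: "walk tf hf s bs t" "set bs \<subseteq> set as" "distinct (s # map hf bs)"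
    using walk_simple[OF as(1)] by blast
  have dbs: "distinct bs" using bs(3) by (simp add: distinct_map)
  have supp: "set bs \<subseteq> {a. f a = 1}" using bs(2) as(2) by blast
  have bsA: "set bs \<subseteq> Arcs" using supp isflow_Arcs[OF f] by fastforce
  define ps where "ps = map (\<lambda>a. (a, True)) bs"
  have pvps: "pv ps a = of_bool (a \<in> set bs)" for a unfolding ps_def using pv_fwd[OF dbs] .
  have wps: "walk (rtf tf hf) (rhf tf hf) s ps t" unfolding ps_def by (rule walk_fwd[OF bs(1)])
  have fps: "fst ` set ps \<subseteq> Arcs" unfolding ps_def using bsA by auto
  define f' where "f' = (\<lambda>a. f a - pv ps a)"
  have exf': "ex f' n = ex f n - (of_bool (n = t) - of_bool (n = s))" for n
    unfolding f'_def ex_diff ex_pv[OF wps fps] ..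
  have f'v: "f' a = (if a \<in> set bs then 0 else f a)" for a
    unfolding f'_def pvps using supp by auto
  have isf': "isflow f'"
    unfolding isflow_def
  proof (intro conjI allI impI)
    fix a show "f' a = 0 \<or> f' a = 1" using f'v[of a] f isflow_def by auto
  next
    fix a assume "a \<notin> Arcs" then show "f' a = 0" using f'v[of a] f isflow_def by auto
  next
    fix n assume "n \<noteq> s \<and> n \<noteq> t" then show "ex f' n = 0" using exf'[of n] f isflow_def by auto
  qed
  have vf': "val f' = int m" using exf'[of s] Suc.prems(2) st unfolding val_def by simp
  obtain W' where W': "\<forall>i<m. walk tf hf s (W' i) t \<and> distinct (s # map hf (W' i)) \<and> set (W' i) \<subseteq> {a. f' a = 1}"
    "\<forall>i<m. \<forall>j<m. i \<noteq> j \<longrightarrow> set (W' i) \<inter> set (W' j) = {}"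
    using Suc.IH[OF isf' vf'] by blast
  have sub: "{a. f' a = 1} \<subseteq> {a. f a = 1} - set bs" using f'v by auto
  define W where "W = W'(m := bs)"
  have 1: "\<forall>i<Suc m. walk tf hf s (W i) t \<and> distinct (s # map hf (W i)) \<and> set (W i) \<subseteq> {a. f a = 1}"
  proof (intro allI impI)
    fix i assume "i < Suc m"
    show "walk tf hf s (W i) t \<and> distinct (s # map hf (W i)) \<and> set (W i) \<subseteq> {a. f a = 1}"
    proof (cases "i = m")
      case True
      then show ?thesis unfolding W_def using bs supp by simp
    next
      case False
      then have "i < m" using \<open>i < Suc m\<close> by simp
      then show ?thesis unfolding W_def using W'(1) sub False by fastforce
    qed
  qed
  have 2: "\<forall>i<Suc m. \<forall>j<Suc m. i \<noteq> j \<longrightarrow> set (W i) \<inter> set (W j) = {}"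
  proof (intro allI impI)
    fix i j assume ij: "i < Suc m" "j < Suc m" "i \<noteq> j"
    have d: "k < m \<Longrightarrow> set (W' k) \<inter> set bs = {}" for k using W'(1) sub by blast
    show "set (W i) \<inter> set (W j) = {}"
    proof (cases "i = m")
      case True
      then have "j < m" using ij by simp
      then show ?thesis using d[of j] True ij unfolding W_def by auto
    next
      case False
      then have i: "i < m" using ij by simp
      show ?thesis
      proof (cases "j = m")
        case True
        then show ?thesis using d[of i] i unfolding W_def by auto
      next
        case False
        then show ?thesis using W'(2) i ij \<open>i \<noteq> m\<close> unfolding W_def by simp
      qed
    qed
  qed
  show ?case using 1 2 by blast
qed

end




definition node_in :: "'v \<Rightarrow> 'v \<Rightarrow> 'v \<Rightarrow> 'v \<times> bool" where
  "node_in s t w = (w, w = s \<or> w = t)"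

fun atf :: "('e \<times> 'v \<times> 'v) + ('v \<times> bool) \<Rightarrow> 'v \<times> bool" where
  "atf (Inl (e, u, w)) = (u, True)"
| "atf (Inr (v, b)) = (v, False)"

fun ahf :: "'v \<Rightarrow> 'v \<Rightarrow> ('e \<times> 'v \<times> 'v) + ('v \<times> bool) \<Rightarrow> 'v \<times> bool" where
  "ahf s t (Inl (e, u, w)) = node_in s t w"
| "ahf s t (Inr (v, b)) = (v, True)"

definition aArcs :: "'v set \<Rightarrow> 'e set \<Rightarrow> ('e \<Rightarrow> 'v set) \<Rightarrow> 'v \<Rightarrow> 'v \<Rightarrow> (('e \<times> 'v \<times> 'v) + ('v \<times> bool)) set" where
  "aArcs V E ends s t = Inl ` {(e, u, w). e \<in> E \<and> ends e = {u, w} \<and> u \<noteq> w} \<union> Inr ` ((V - {s, t}) \<times> UNIV)"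

lemma aArcs_Inl: "Inl (e, u, w) \<in> aArcs V E ends s t \<longleftrightarrow> e \<in> E \<and> ends e = {u, w} \<and> u \<noteq> w"
  unfolding aArcs_def by auto

lemma aArcs_Inr: "Inr (v, b) \<in> aArcs V E ends s t \<longleftrightarrow> v \<in> V - {s, t}"
  unfolding aArcs_def by auto

lemma finite_aArcs:
  assumes "graph V E ends"
  shows "finite (aArcs V E ends s t)"
proof -
  have "{(e, u, w). e \<in> E \<and> ends e = {u, w} \<and> u \<noteq> w} \<subseteq> E \<times> V \<times> V"
    using assms unfolding graph_def by auto
  moreover have "finite (E \<times> V \<times> V)" using assms unfolding graph_def by simp
  ultimately have "finite {(e, u, w). e \<in> E \<and> ends e = {u, w} \<and> u \<noteq> w}"
    by (rule finite_subset)
  moreover have "finite ((V - {s, t}) \<times> (UNIV :: bool set))" using assms unfolding graph_def by simp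
  ultimately show ?thesis unfolding aArcs_def by simp
qed

lemma lambda_le:
  assumes finF: "finite F"
    and hit: "\<And>p. is_path V' E' ends s t p \<Longrightarrow> set (snd p) \<inter> F \<noteq> {}"
  shows "lambda V' E' ends s t \<le> enat (card F)"
  unfolding lambda_def
proof (rule Sup_least)
  fix x assume "x \<in> {enat k |k. \<exists>P. edge_disjoint_paths V' E' ends s t k P}"
  then obtain k P where x: "x = enat k" and P: "edge_disjoint_paths V' E' ends s t k P" by blast
  define h where "h i = (SOME e. e \<in> set (snd (P i)) \<inter> F)" for i
  have hi: "h i \<in> set (snd (P i)) \<inter> F" if "i < k" for i
  proof -
    have "set (snd (P i)) \<inter> F \<noteq> {}" using hit P that unfolding edge_disjoint_paths_def by blast
    then show ?thesis unfolding h_def by (metis (no_types, lifting) ex_in_conv someI_ex)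
  qed
  have "inj_on h {..<k}"
  proof (rule inj_onI)
    fix i j assume "i \<in> {..<k}" "j \<in> {..<k}" "h i = h j"
    then show "i = j" using hi[of i] hi[of j] P unfolding edge_disjoint_paths_def by auto
  qed
  moreover have "h ` {..<k} \<subseteq> F" using hi by auto
  ultimately have "card {..<k} \<le> card F" using finF by (rule card_inj_on_le)
  then show "x \<le> enat (card F)" using x by simp
qed


lemma separation:
  assumes S: "(s, True) \<in> S" "(t, True) \<notin> S"
    and C: "C = {v \<in> V - {s, t}. (v, False) \<in> S \<and> (v, True) \<notin> S}"
    and F: "F = {e \<in> E. \<exists>u w. ends e = {u, w} \<and> u \<noteq> w \<and> (u, True) \<in> S \<and> node_in s t w \<notin> S}"
    and p: "is_path (V - C) {e \<in> E. ends e \<inter> C = {}} ends s t p"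
  shows "set (snd p) \<inter> F \<noteq> {}"
proof
  assume nF: "set (snd p) \<inter> F = {}"
  obtain vs es where pe: "p = (vs, es)" by (cases p)
  have len: "length vs = Suc (length es)" and dv: "distinct vs" and sv: "set vs \<subseteq> V - C"
    and hd: "hd vs = s" and lst: "last vs = t"
    and ed: "\<And>i. i < length es \<Longrightarrow> es ! i \<in> {e \<in> E. ends e \<inter> C = {}} \<and> ends (es ! i) = {vs ! i, vs ! Suc i}"
    using p unfolding is_path_def pe Let_def by auto
  have key: "i \<le> length es \<Longrightarrow> (vs ! i, True) \<in> S" for i
  proof (induction i)
    case 0
    have "vs \<noteq> []" using len by auto
    then have "vs ! 0 = s" using hd by (simp add: hd_conv_nth)
    then show ?case using S by simp
  next
    case (Suc i)
    then have i: "i < length es" by simp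
    have IH: "(vs ! i, True) \<in> S" using Suc by simp
    let ?e = "es ! i" and ?u = "vs ! i" and ?w = "vs ! Suc i"
    have e: "?e \<in> E" "ends ?e \<inter> C = {}" "ends ?e = {?u, ?w}" using ed[OF i] by auto
    have uw: "?u \<noteq> ?w" using dv len i by (simp add: nth_eq_iff_index_eq)
    have "?e \<in> set (snd p)" using i pe by simp
    then have "?e \<notin> F" using nF by blast
    then have win: "node_in s t ?w \<in> S" using e uw IH unfolding F by blast
    have wV: "?w \<in> V - C" using sv len i by (simp add: subset_iff)
    show ?case
    proof (cases "?w = s \<or> ?w = t")
      case True
      then show ?thesis using win unfolding node_in_def by simp
    next
      case False
      then have "(?w, False) \<in> S" using win unfolding node_in_def by simp
      moreover have "?w \<notin> C" using wV by simp
      ultimately show ?thesis using False wV unfolding C by auto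
    qed
  qed
  have "vs ! length es = t" using lst len by (metis diff_Suc_1 last_conv_nth list.size(3) nat.distinct(1))
  then show False using key[of "length es"] S by simp
qed

lemma cut_condition:
  fixes V :: "'v set" and E :: "'e set" and ends :: "'e \<Rightarrow> 'v set"
  assumes g: "graph V E ends" and sV: "s \<in> V" and tV: "t \<in> V" and st: "s \<noteq> t"
    and L: "\<forall>C. C \<subseteq> V - {s, t} \<and> card C < l \<longrightarrow>
             lambda (del_verts_V V C) (del_verts_E E ends C) ends s t \<ge> enat (2 * (l - card C))"
    and S: "(s, True) \<in> S" "(t, True) \<notin> S"
  shows "2 * l \<le> card (dg.cutset (aArcs V E ends s t) atf (ahf s t) S)"
proof -
  interpret D: dg "aArcs V E ends s t" atf "ahf s t" "(s, True)" "(t, True)"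
    using finite_aArcs[OF g] st by unfold_locales auto
  define C where "C = {v \<in> V - {s, t}. (v, False) \<in> S \<and> (v, True) \<notin> S}"
  define F where "F = {e \<in> E. \<exists>u w. ends e = {u, w} \<and> u \<noteq> w \<and> (u, True) \<in> S \<and> node_in s t w \<notin> S}"
  let ?cut = "D.cutset S"
  have fincut: "finite ?cut" using D.fin unfolding D.cutset_def by simp
  define CL where "CL = ?cut \<inter> range Inl"
  define CR where "CR = ?cut \<inter> range Inr"
  have cutsplit: "card ?cut = card CL + card CR"
  proof -
    have "?cut = ?cut \<inter> (range Inl \<union> range Inr)" using UNIV_sum by (metis Int_UNIV_right)
    then have "?cut = CL \<union> CR" unfolding CL_def CR_def by (simp add: Int_Un_distrib)
    moreover have "CL \<inter> CR = {}" unfolding CL_def CR_def by auto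
    moreover have "finite CL" "finite CR" using fincut unfolding CL_def CR_def by auto
    ultimately show ?thesis by (simp add: card_Un_disjoint)
  qed
  have FCL: "card F \<le> card CL"
  proof -
    have "F \<subseteq> (\<lambda>x. fst (projl x)) ` CL"
    proof
      fix e assume "e \<in> F"
      then obtain u w where e: "e \<in> E" "ends e = {u, w}" "u \<noteq> w" "(u, True) \<in> S" "node_in s t w \<notin> S"
        unfolding F_def by blast
      have "Inl (e, u, w) \<in> CL" using e by (simp add: CL_def D.cutset_def aArcs_Inl)
      then show "e \<in> (\<lambda>x. fst (projl x)) ` CL" by (rule rev_image_eqI) simp
    qed
    then have "card F \<le> card ((\<lambda>x. fst (projl x)) ` CL)"
      using fincut unfolding CL_def by (intro card_mono) auto
    also have "\<dots> \<le> card CL" using fincut unfolding CL_def by (intro card_image_le) auto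
    finally show ?thesis .
  qed
  have CCR: "2 * card C \<le> card CR"
  proof -
    define IC where "IC = (Inr ` (C \<times> (UNIV :: bool set)) :: (('e \<times> 'v \<times> 'v) + ('v \<times> bool)) set)"
    have sub: "IC \<subseteq> CR"
    proof
      fix x assume "x \<in> IC"
      then obtain v b where x: "x = Inr (v, b)" "v \<in> C" unfolding IC_def by blast
      then show "x \<in> CR" using x by (simp add: CR_def D.cutset_def aArcs_Inr C_def)
    qed
    have fCR: "finite CR" using fincut unfolding CR_def by simp
    have c1: "card IC \<le> card CR" using card_mono[OF fCR sub] .
    have "card IC = card (C \<times> (UNIV :: bool set))"
      unfolding IC_def by (rule card_image) (simp add: inj_on_def)
    also have "\<dots> = card C * 2" by (simp add: card_cartesian_product)
    finally show ?thesis using c1 by simp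
  qed
  show ?thesis
  proof (cases "card C < l")
    case False
    then show ?thesis using cutsplit CCR by linarith
  next
    case True
    have Csub: "C \<subseteq> V - {s, t}" unfolding C_def by auto
    have "F \<subseteq> E" unfolding F_def by blast
    then have finF: "finite F" using g unfolding graph_def by (meson finite_subset)
    have "lambda (del_verts_V V C) (del_verts_E E ends C) ends s t \<le> enat (card F)"
    proof (rule lambda_le[OF finF])
      fix p assume "is_path (del_verts_V V C) (del_verts_E E ends C) ends s t p"
      then show "set (snd p) \<inter> F \<noteq> {}"
        unfolding del_verts_V_def del_verts_E_def
        by (rule separation[OF S C_def F_def])
    qed
    moreover have "enat (2 * (l - card C)) \<le> lambda (del_verts_V V C) (del_verts_E E ends C) ends s t"
      using L[rule_format, OF conjI[OF Csub True]] .
    ultimately have "enat (2 * (l - card C)) \<le> enat (card F)" by (rule order_trans[rotated])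
    then have "2 * (l - card C) \<le> card F" by simp
    then show ?thesis using cutsplit CCR FCL by linarith
  qed
qed


fun proj :: "(('e \<times> 'v \<times> 'v) + ('v \<times> bool)) list \<Rightarrow> ('e \<times> 'v \<times> 'v) list" where
  "proj [] = []"
| "proj (Inl x # as) = x # proj as"
| "proj (Inr y # as) = proj as"

fun chain :: "'e set \<Rightarrow> ('e \<Rightarrow> 'v set) \<Rightarrow> 'v \<Rightarrow> ('e \<times> 'v \<times> 'v) list \<Rightarrow> 'v \<Rightarrow> bool" where
  "chain E ends a [] b = (a = b)"
| "chain E ends a ((e, u, w) # r) b = (u = a \<and> e \<in> E \<and> ends e = {u, w} \<and> chain E ends w r b)"

lemma proj_set: "x \<in> set (proj as) \<Longrightarrow> Inl x \<in> set as"
  by (induction as rule: proj.induct) auto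

lemma proj_hf: "map (ahf s t) (filter isl as) = map (node_in s t \<circ> snd \<circ> snd) (proj as)"
  by (induction as rule: proj.induct) auto

lemma walk_chain:
  "walk atf (ahf s t) x as y \<Longrightarrow> set as \<subseteq> aArcs V E ends s t \<Longrightarrow>
   x = (a, True) \<or> x = node_in s t a \<Longrightarrow> y = (b, True) \<Longrightarrow> chain E ends a (proj as) b"
proof (induction as arbitrary: x a)
  case Nil
  then show ?case by (auto simp: node_in_def)
next
  case (Cons c as)
  show ?case
  proof (cases c)
    case (Inl x1)
    obtain e u w where c: "c = Inl (e, u, w)" using Inl by (cases x1) auto
    have "u = a" using Cons.prems(1,3) c by (auto simp: node_in_def)
    moreover have "e \<in> E" "ends e = {u, w}" using Cons.prems(2) c by (auto simp: aArcs_Inl)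
    moreover have "chain E ends w (proj as) b"
      using Cons.IH[of "node_in s t w" w] Cons.prems c by auto
    ultimately show ?thesis using c by simp
  next
    case (Inr x2)
    obtain v d where c: "c = Inr (v, d)" using Inr by (cases x2) auto
    have "v = a" using Cons.prems(1,3) c by (auto simp: node_in_def)
    then have "chain E ends a (proj as) b"
      using Cons.IH[of "(v, True)" a] Cons.prems c by auto
    then show ?thesis using c by simp
  qed
qed

lemma chain_path:
  "chain E ends a el b \<Longrightarrow>
   length (a # map (snd \<circ> snd) el) = Suc (length (map fst el)) \<and>
   last (a # map (snd \<circ> snd) el) = b \<and>
   (\<forall>i < length (map fst el). map fst el ! i \<in> E \<and>
      ends (map fst el ! i) = {(a # map (snd \<circ> snd) el) ! i, (a # map (snd \<circ> snd) el) ! Suc i})"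
proof (induction el arbitrary: a)
  case Nil
  then show ?case by simp
next
  case (Cons x el)
  obtain e u w where x: "x = (e, u, w)" by (cases x) auto
  have c: "u = a" "e \<in> E" "ends e = {u, w}" "chain E ends w el b" using Cons.prems x by auto
  note IH = Cons.IH[OF c(4)]
  have l1: "length (a # map (snd \<circ> snd) (x # el)) = Suc (length (map fst (x # el)))" by simp
  have l2: "last (a # map (snd \<circ> snd) (x # el)) = b" using IH x by (simp add: comp_def)
  have l3: "\<forall>i < length (map fst (x # el)). map fst (x # el) ! i \<in> E \<and>
      ends (map fst (x # el) ! i) = {(a # map (snd \<circ> snd) (x # el)) ! i, (a # map (snd \<circ> snd) (x # el)) ! Suc i}"
  proof (intro allI impI)
    fix i assume i: "i < length (map fst (x # el))"
    show "map fst (x # el) ! i \<in> E \<and>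
      ends (map fst (x # el) ! i) = {(a # map (snd \<circ> snd) (x # el)) ! i, (a # map (snd \<circ> snd) (x # el)) ! Suc i}"
    proof (cases i)
      case 0
      then show ?thesis using c x by simp
    next
      case (Suc j)
      then have "j < length (map fst el)" using i by simp
      then show ?thesis using IH x Suc by (simp add: comp_def)
    qed
  qed
  show ?case using l1 l2 l3 by blast
qed

lemma chain_set:
  "chain E ends a el b \<Longrightarrow> graph V E ends \<Longrightarrow> a \<in> V \<Longrightarrow> set (a # map (snd \<circ> snd) el) \<subseteq> V"
proof (induction el arbitrary: a)
  case Nil
  then show ?case by simp
next
  case (Cons x el)
  obtain e u w where x: "x = (e, u, w)" by (cases x) auto
  have c: "e \<in> E" "ends e = {u, w}" "chain E ends w el b" using Cons.prems x by auto
  have "w \<in> V" using c Cons.prems(2) unfolding graph_def by blast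
  then show ?case using Cons.IH[OF c(3) Cons.prems(2)] Cons.prems(3) x by simp
qed


locale hs =
  fixes V :: "'v set" and E :: "'e set" and ends :: "'e \<Rightarrow> 'v set" and s t :: 'v
  assumes g: "graph V E ends" and sV: "s \<in> V" and tV: "t \<in> V" and st: "s \<noteq> t"
begin

abbreviation AA :: "(('e \<times> 'v \<times> 'v) + ('v \<times> bool)) set" where
  "AA \<equiv> aArcs V E ends s t"

sublocale D: dg AA atf "ahf s t" "(s, True)" "(t, True)"
  using finite_aArcs[OF g] st by unfold_locales auto

lemma atf_False: "atf a = (v, False) \<Longrightarrow> \<exists>b. a = Inr (v, b)"
  by (cases a rule: atf.cases) auto

lemma internal_out:
  assumes f: "D.isflow f" and v: "v \<in> V - {s, t}" and a: "a \<in> AA" "f a = 1" "ahf s t a = (v, False)"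
  shows "\<exists>b. f (Inr (v, b)) = 1"
proof (rule ccontr)
  assume nb: "\<not> ?thesis"
  let ?n = "(v, False)"
  have fvals: "\<And>x. f x = 0 \<or> f x = 1" using f unfolding D.isflow_def by blast
  have ex0: "D.ex f ?n = 0" using f v unfolding D.isflow_def by auto
  let ?T = "\<lambda>x. f x * (of_bool (ahf s t x = ?n) - of_bool (atf x = ?n))"
  have nonneg: "0 \<le> ?T x" for x
  proof (cases "atf x = ?n")
    case True
    obtain b where xb: "x = Inr (v, b)" using atf_False[OF True] by (elim exE)
    have "f (Inr (v, b)) \<noteq> 1" using nb by simp
    then have "f x = 0" using fvals[of x] xb by auto
    then show ?thesis by simp
  next
    case False
    then show ?thesis using fvals[of x] by auto
  qed
  have "atf a \<noteq> ?n"
  proof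
    assume an: "atf a = ?n"
    obtain b where ab: "a = Inr (v, b)" using atf_False[OF an] by (elim exE)
    have "f (Inr (v, b)) \<noteq> 1" using nb by simp
    then show False using a(2) ab by simp
  qed
  then have Ta: "?T a = 1" using a by simp
  have "?T a \<le> (\<Sum>x\<in>AA. ?T x)"
    by (rule member_le_sum) (simp_all add: a(1) nonneg D.fin)
  then show False using ex0 Ta unfolding D.ex_def by simp
qed

lemma no_reverse:
  assumes f: "D.isflow f"
    and minimal: "\<And>g. D.isflow g \<Longrightarrow> D.val f \<le> D.val g \<Longrightarrow> card {a. f a = 1} \<le> card {a. g a = 1}"
  shows "\<not> (f (Inl (e, u, w)) = 1 \<and> f (Inl (e, w, u)) = 1)"
proof
  assume both: "f (Inl (e, u, w)) = 1 \<and> f (Inl (e, w, u)) = 1"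
  let ?a1 = "Inl (e, u, w) :: ('e \<times> 'v \<times> 'v) + ('v \<times> bool)"
  let ?a2 = "Inl (e, w, u) :: ('e \<times> 'v \<times> 'v) + ('v \<times> bool)"
  have fvals: "\<And>x. f x = 0 \<or> f x = 1" using f unfolding D.isflow_def by blast
  have a1: "?a1 \<in> AA" using both D.isflow_Arcs[OF f, of ?a1] by simp
  have a2: "?a2 \<in> AA" using both D.isflow_Arcs[OF f, of ?a2] by simp
  have e: "e \<in> E" "ends e = {u, w}" "u \<noteq> w" using a1 by (auto simp: aArcs_Inl)
  have uV: "u \<in> V" and wV: "w \<in> V" using e g unfolding graph_def by blast+
  obtain bw where bw: "w \<notin> {s, t} \<Longrightarrow> f (Inr (w, bw)) = 1"
  proof (cases "w \<in> {s, t}")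
    case True
    then show ?thesis using that by blast
  next
    case False
    then have h: "ahf s t ?a1 = (w, False)" by (simp add: node_in_def)
    have w': "w \<in> V - {s, t}" using False wV by simp
    have f1: "f ?a1 = 1" using both by simp
    obtain b where "f (Inr (w, b)) = 1" using internal_out[OF f w' a1 f1 h] by (elim exE)
    then show ?thesis using that by blast
  qed
  obtain bu where bu: "u \<notin> {s, t} \<Longrightarrow> f (Inr (u, bu)) = 1"
  proof (cases "u \<in> {s, t}")
    case True
    then show ?thesis using that by blast
  next
    case False
    then have h: "ahf s t ?a2 = (u, False)" by (simp add: node_in_def)
    have u': "u \<in> V - {s, t}" using False uV by simp
    have f2: "f ?a2 = 1" using both by simp
    obtain b where "f (Inr (u, b)) = 1" using internal_out[OF f u' a2 f2 h] by (elim exE)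
    then show ?thesis using that by blast
  qed
  define Lw where "Lw = ((if w \<in> {s, t} then [] else [Inr (w, bw)]) :: (('e \<times> 'v \<times> 'v) + ('v \<times> bool)) list)"
  define Lu where "Lu = ((if u \<in> {s, t} then [] else [Inr (u, bu)]) :: (('e \<times> 'v \<times> 'v) + ('v \<times> bool)) list)"
  define L where "L = ?a1 # Lw @ ?a2 # Lu"
  have wL: "walk atf (ahf s t) (u, True) L (u, True)"
    unfolding L_def Lw_def Lu_def by (cases "w \<in> {s, t}"; cases "u \<in> {s, t}") (auto simp: node_in_def)
  have dL: "distinct L"
    unfolding L_def Lw_def Lu_def using e(3) by auto
  have suppL: "set L \<subseteq> {a. f a = 1}"
    unfolding L_def Lw_def Lu_def using both bw bu by auto
  have suppA: "{a. f a = 1} \<subseteq> AA" using D.isflow_Arcs[OF f] by force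
  have LA: "set L \<subseteq> AA" using suppL suppA by (rule order_trans)
  define ps where "ps = map (\<lambda>a. (a, True)) L"
  have pvps: "pv ps a = of_bool (a \<in> set L)" for a unfolding ps_def using pv_fwd[OF dL] .
  have wps: "walk (rtf atf (ahf s t)) (rhf atf (ahf s t)) (u, True) ps (u, True)"
    unfolding ps_def by (rule walk_fwd[OF wL])
  have fps: "fst ` set ps \<subseteq> AA" unfolding ps_def using LA by auto
  define f' where "f' = (\<lambda>a. f a - pv ps a)"
  have exf': "D.ex f' n = D.ex f n" for n
    unfolding f'_def D.ex_diff D.ex_pv[OF wps fps] by simp
  have f'v: "f' a = (if a \<in> set L then 0 else f a)" for a
    unfolding f'_def pvps using suppL by auto
  have isf': "D.isflow f'"
    unfolding D.isflow_def
  proof (intro conjI allI impI)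
    fix a show "f' a = 0 \<or> f' a = 1" using f'v[of a] fvals[of a] by auto
  next
    fix a assume "a \<notin> AA" then show "f' a = 0" using f'v[of a] f D.isflow_def by auto
  next
    fix n assume nn: "n \<noteq> (s, True) \<and> n \<noteq> (t, True)"
    have "D.ex f n = 0" using f nn unfolding D.isflow_def by blast
    then show "D.ex f' n = 0" using exf'[of n] by simp
  qed
  have vf': "D.val f' = D.val f" unfolding D.val_def using exf' by simp
  have sub: "{a. f' a = 1} \<subseteq> {a. f a = 1} - {?a1}" using f'v unfolding L_def by auto
  have finS: "finite {a. f a = 1}" using D.fin suppA by (rule finite_subset[rotated])
  have "card {a. f' a = 1} \<le> card ({a. f a = 1} - {?a1})"
    using finS sub by (intro card_mono) auto
  also have "\<dots> < card {a. f a = 1}"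
    using finS both by (intro card_Diff1_less) auto
  finally have "card {a. f' a = 1} < card {a. f a = 1}" .
  moreover have "card {a. f a = 1} \<le> card {a. f' a = 1}" using minimal[OF isf'] vf' by simp
  ultimately show False by simp
qed

lemma paths_exist:
  assumes cut: "\<And>S. (s, True) \<in> S \<Longrightarrow> (t, True) \<notin> S \<Longrightarrow> 2 * l \<le> card (D.cutset S)"
  shows "\<exists>P. edge_disjoint_paths V E ends s t (2 * l) P \<and>
              (\<forall>v \<in> V - {s, t}. card {i. i < 2 * l \<and> v \<in> set (fst (P i))} \<le> 2)"
proof -
  obtain f0 where f0: "D.isflow f0 \<and> int (2 * l) \<le> D.val f0"
    using D.maxflow_mincut[of "2 * l"] cut by blast
  obtain f where fP: "D.isflow f \<and> int (2 * l) \<le> D.val f"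
    and fmin: "\<forall>g. D.isflow g \<and> int (2 * l) \<le> D.val g \<longrightarrow> card {a. f a = 1} \<le> card {a. g a = 1}"
    using ex_has_least_nat[of "\<lambda>g. D.isflow g \<and> int (2 * l) \<le> D.val g" f0 "\<lambda>g. card {a. g a = 1}"] f0
    by blast
  have f: "D.isflow f" and fv: "int (2 * l) \<le> D.val f" using fP by auto
  have minimal: "card {a. f a = 1} \<le> card {a. g a = 1}" if "D.isflow g" "D.val f \<le> D.val g" for g
    using fmin that fv by auto
  have norev: "\<not> (f (Inl (e, u, w)) = 1 \<and> f (Inl (e, w, u)) = 1)" for e u w
    using no_reverse[OF f minimal] by blast
  define m where "m = nat (D.val f)"
  have vm: "D.val f = int m" using fv unfolding m_def by simp
  have lm: "2 * l \<le> m" using fv unfolding m_def by simp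
  obtain W where W1: "\<forall>i<m. walk atf (ahf s t) (s, True) (W i) (t, True) \<and>
        distinct ((s, True) # map (ahf s t) (W i)) \<and> set (W i) \<subseteq> {a. f a = 1}"
    and W2: "\<forall>i<m. \<forall>j<m. i \<noteq> j \<longrightarrow> set (W i) \<inter> set (W j) = {}"
    using D.decompose[OF f vm] by blast
  have suppA: "{a. f a = 1} \<subseteq> AA" using D.isflow_Arcs[OF f] by force
  define P where "P i = (s # map (snd \<circ> snd) (proj (W i)), map fst (proj (W i)))" for i
  have WA: "set (W i) \<subseteq> AA" if "i < m" for i using W1 that suppA by blast
  have path: "is_path V E ends s t (P i)" if i: "i < m" for i
  proof -
    have w: "walk atf (ahf s t) (s, True) (W i) (t, True)" using W1 i by blast
    have ch: "chain E ends s (proj (W i)) t"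
      using walk_chain[OF w WA[OF i]] by blast
    note cp = chain_path[OF ch]
    have sv: "set (s # map (snd \<circ> snd) (proj (W i))) \<subseteq> V" using chain_set[OF ch g sV] .
    have d0: "distinct ((s, True) # map (ahf s t) (W i))" using W1 i by blast
    have d1: "distinct (map (ahf s t) (filter isl (W i)))"
      using d0 by (simp add: distinct_map_filter)
    have d2: "(s, True) \<notin> set (map (ahf s t) (filter isl (W i)))" using d0 by auto
    have "distinct ((s, True) # map (node_in s t \<circ> snd \<circ> snd) (proj (W i)))"
      using d1 d2 unfolding proj_hf by simp
    then have "distinct (map (node_in s t) (s # map (snd \<circ> snd) (proj (W i))))"
      by (simp add: node_in_def comp_def)
    then have dv: "distinct (s # map (snd \<circ> snd) (proj (W i)))"
      using distinct_map[of "node_in s t" "s # map (snd \<circ> snd) (proj (W i))"] by blast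
    show ?thesis
      unfolding is_path_def P_def Let_def fst_conv snd_conv
      using cp sv dv by simp
  qed
  have edisj: "set (snd (P i)) \<inter> set (snd (P j)) = {}" if ij: "i < m" "j < m" "i \<noteq> j" for i j
  proof (rule ccontr)
    assume "set (snd (P i)) \<inter> set (snd (P j)) \<noteq> {}"
    then obtain e where ei: "e \<in> fst ` set (proj (W i))" and ej: "e \<in> fst ` set (proj (W j))"
      unfolding P_def by auto
    obtain u w where uw: "(e, u, w) \<in> set (proj (W i))" using ei by force
    obtain u' w' where uw': "(e, u', w') \<in> set (proj (W j))" using ej by force
    have ai: "Inl (e, u, w) \<in> set (W i)" using proj_set[OF uw] .
    have aj: "Inl (e, u', w') \<in> set (W j)" using proj_set[OF uw'] .
    have "Inl (e, u, w) \<in> AA" using ai WA[OF ij(1)] by blast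
    then have e1: "ends e = {u, w}" "u \<noteq> w" by (auto simp: aArcs_Inl)
    have "Inl (e, u', w') \<in> AA" using aj WA[OF ij(2)] by blast
    then have e2: "ends e = {u', w'}" by (auto simp: aArcs_Inl)
    have "(u' = u \<and> w' = w) \<or> (u' = w \<and> w' = u)" using e1 e2 by (metis doubleton_eq_iff)
    then show False
    proof
      assume "u' = u \<and> w' = w"
      then have "Inl (e, u, w) \<in> set (W i) \<inter> set (W j)" using ai aj by simp
      then show False using W2 ij by blast
    next
      assume "u' = w \<and> w' = u"
      then have "Inl (e, w, u) \<in> set (W j)" using aj by simp
      then have "f (Inl (e, w, u)) = 1" using W1 ij(2) by blast
      moreover have "f (Inl (e, u, w)) = 1" using ai W1 ij(1) by blast
      ultimately show False using norev by blast
    qed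
  qed
  have usage: "\<exists>b. Inr (v, b) \<in> set (W i)" if i: "i < m" and v: "v \<in> V - {s, t}" and vi: "v \<in> set (fst (P i))" for i v
  proof -
    have "v \<in> (snd \<circ> snd) ` set (proj (W i))" using vi v unfolding P_def by auto
    then obtain e u where "(e, u, v) \<in> set (proj (W i))" by force
    then have inl: "Inl (e, u, v) \<in> set (W i)" by (rule proj_set)
    have "ahf s t (Inl (e, u, v)) = (v, False)" using v by (simp add: node_in_def)
    then have z: "(v, False) \<in> ahf s t ` set (W i)" using inl by (metis image_eqI)
    have w: "walk atf (ahf s t) (s, True) (W i) (t, True)" using W1 i by blast
    obtain a where a: "a \<in> set (W i)" "atf a = (v, False)" using walk_next[OF w z] by auto
    obtain b where "a = Inr (v, b)" using atf_False[OF a(2)] by (elim exE)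
    then show ?thesis using a(1) by blast
  qed
  have "edge_disjoint_paths V E ends s t (2 * l) P"
    unfolding edge_disjoint_paths_def using path edisj lm by auto
  moreover have "card {i. i < 2 * l \<and> v \<in> set (fst (P i))} \<le> 2" if v: "v \<in> V - {s, t}" for v
  proof -
    let ?I = "{i. i < 2 * l \<and> v \<in> set (fst (P i))}"
    define h where "h i = (SOME b. Inr (v, b) \<in> set (W i))" for i
    have hi: "Inr (v, h i) \<in> set (W i)" if "i \<in> ?I" for i
    proof -
      have "\<exists>b. Inr (v, b) \<in> set (W i)" using usage[of i v] that v lm by auto
      then show ?thesis unfolding h_def by (rule someI_ex)
    qed
    have "inj_on h ?I"
    proof (rule inj_onI)
      fix i j assume ij: "i \<in> ?I" "j \<in> ?I" "h i = h j"
      have "Inr (v, h i) \<in> set (W i) \<inter> set (W j)" using hi[OF ij(1)] hi[OF ij(2)] ij(3) by simp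
      moreover have "i < m" "j < m" using ij(1,2) lm by auto
      ultimately show "i = j" using W2 by blast
    qed
    then have "card ?I \<le> card (UNIV :: bool set)"
      by (rule card_inj_on_le) auto
    then show ?thesis by simp
  qed
  ultimately show ?thesis by blast
qed

end


lemma path_restrict:
  assumes p: "is_path V E ends s t p" and C: "set (fst p) \<inter> C = {}"
  shows "is_path (V - C) {e \<in> E. ends e \<inter> C = {}} ends s t p"
proof -
  obtain vs es where pe: "p = (vs, es)" by (cases p)
  have len: "length vs = Suc (length es)" and sv: "set vs \<subseteq> V"
    and ed: "\<And>i. i < length es \<Longrightarrow> es ! i \<in> E \<and> ends (es ! i) = {vs ! i, vs ! Suc i}"
    using p unfolding is_path_def pe Let_def by auto
  have Cv: "set vs \<inter> C = {}" using C pe by simp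
  have "ends (es ! i) \<inter> C = {}" if i: "i < length es" for i
  proof -
    have "vs ! i \<in> set vs" "vs ! Suc i \<in> set vs" using i len by auto
    then show ?thesis using ed[OF i] Cv by auto
  qed
  then show ?thesis using p Cv unfolding is_path_def pe Let_def by auto
qed

lemma rhs_to_lhs:
  assumes g: "graph V E ends"
    and P: "edge_disjoint_paths V E ends s t (2 * l) P"
    and use: "\<forall>v \<in> V - {s, t}. card {i. i < 2 * l \<and> v \<in> set (fst (P i))} \<le> 2"
    and C: "C \<subseteq> V - {s, t}" "card C < l"
  shows "enat (2 * (l - card C)) \<le> lambda (del_verts_V V C) (del_verts_E E ends C) ends s t"
proof -
  have finC: "finite C" using C(1) g unfolding graph_def by (meson finite_Diff finite_subset)
  define I where "I = {i. i < 2 * l \<and> set (fst (P i)) \<inter> C = {}}"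
  define J where "J = {i. i < 2 * l \<and> set (fst (P i)) \<inter> C \<noteq> {}}"
  have IJ: "I \<union> J = {..<2 * l}" "I \<inter> J = {}" unfolding I_def J_def by auto
  have finI: "finite I" "finite J" unfolding I_def J_def by auto
  have cIJ: "card I + card J = 2 * l"
    using card_Un_disjoint[OF finI IJ(2)] IJ(1) by simp
  have "J \<subseteq> (\<Union>v\<in>C. {i. i < 2 * l \<and> v \<in> set (fst (P i))})" unfolding J_def by blast
  then have "card J \<le> card (\<Union>v\<in>C. {i. i < 2 * l \<and> v \<in> set (fst (P i))})"
    by (rule card_mono[rotated]) (simp add: finC)
  also have "\<dots> \<le> (\<Sum>v\<in>C. card {i. i < 2 * l \<and> v \<in> set (fst (P i))})"
    using finC by (rule card_UN_le)
  also have "\<dots> \<le> (\<Sum>v\<in>C. 2)"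
    using use C(1) by (intro sum_mono) blast
  also have "\<dots> = 2 * card C" by simp
  finally have cJ: "card J \<le> 2 * card C" .
  obtain h where h: "bij_betw h {0..<card I} I" using ex_bij_betw_nat_finite[OF finI(1)] by blast
  define Q where "Q i = P (h i)" for i
  have hI: "i < card I \<Longrightarrow> h i \<in> I" for i using h unfolding bij_betw_def by auto
  have "edge_disjoint_paths (del_verts_V V C) (del_verts_E E ends C) ends s t (card I) Q"
    unfolding edge_disjoint_paths_def del_verts_V_def del_verts_E_def
  proof (intro conjI allI impI)
    fix i assume i: "i < card I"
    have hi: "h i \<in> I" using hI[OF i] .
    then have "is_path V E ends s t (P (h i))" using P unfolding I_def edge_disjoint_paths_def by blast
    moreover have "set (fst (P (h i))) \<inter> C = {}" using hi unfolding I_def by blast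
    ultimately show "is_path (V - C) {e \<in> E. ends e \<inter> C = {}} ends s t (Q i)"
      unfolding Q_def by (rule path_restrict)
  next
    fix i j assume ij: "i < card I" "j < card I" "i \<noteq> j"
    have "h i \<noteq> h j" using h ij unfolding bij_betw_def inj_on_def by auto
    moreover have "h i < 2 * l" "h j < 2 * l" using hI ij unfolding I_def by auto
    ultimately show "set (snd (Q i)) \<inter> set (snd (Q j)) = {}"
      using P unfolding Q_def edge_disjoint_paths_def by blast
  qed
  then have "enat (card I) \<le> lambda (del_verts_V V C) (del_verts_E E ends C) ends s t"
    unfolding lambda_def by (intro Sup_upper) blast
  moreover have "2 * (l - card C) \<le> card I" using cIJ cJ C(2) by linarith
  ultimately show ?thesis by (meson enat_ord_simps(1) order_trans)
qed

theorem corollary3: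
  fixes V :: "'v set" and E :: "'e set" and ends :: "'e \<Rightarrow> 'v set"
    and s t :: 'v and l :: nat
  assumes "graph V E ends" and "s \<in> V" and "t \<in> V" and "0 < l"
  shows "(\<forall>C. C \<subseteq> V - {s, t} \<and> card C < l \<longrightarrow>
             lambda (del_verts_V V C) (del_verts_E E ends C) ends s t \<ge> enat (2 * (l - card C)))
         \<longleftrightarrow>
         (\<exists>P. edge_disjoint_paths V E ends s t (2 * l) P \<and>
              (\<forall>v \<in> V - {s, t}. card {i. i < 2 * l \<and> v \<in> set (fst (P i))} \<le> 2))"
proof
  assume L: "\<forall>C. C \<subseteq> V - {s, t} \<and> card C < l \<longrightarrow>
             lambda (del_verts_V V C) (del_verts_E E ends C) ends s t \<ge> enat (2 * (l - card C))"
  show "\<exists>P. edge_disjoint_paths V E ends s t (2 * l) P \<and>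
              (\<forall>v \<in> V - {s, t}. card {i. i < 2 * l \<and> v \<in> set (fst (P i))} \<le> 2)"
  proof (cases "s = t")
    case True
    define P :: "nat \<Rightarrow> 'v list \<times> 'e list" where "P i = ([s], [])" for i
    have "edge_disjoint_paths V E ends s t (2 * l) P"
      unfolding edge_disjoint_paths_def is_path_def P_def Let_def using True assms(2) by simp
    moreover have "\<forall>v \<in> V - {s, t}. card {i. i < 2 * l \<and> v \<in> set (fst (P i))} \<le> 2"
      unfolding P_def by simp
    ultimately show ?thesis by blast
  next
    case False
    interpret H: hs V E ends s t using assms False by unfold_locales auto
    show ?thesis
    proof (rule H.paths_exist)
      fix S :: "('v \<times> bool) set" assume "(s, True) \<in> S" "(t, True) \<notin> S"
      then show "2 * l \<le> card (H.D.cutset S)"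
        using cut_condition[OF assms(1-3) False L] by blast
    qed
  qed
next
  assume "\<exists>P. edge_disjoint_paths V E ends s t (2 * l) P \<and>
              (\<forall>v \<in> V - {s, t}. card {i. i < 2 * l \<and> v \<in> set (fst (P i))} \<le> 2)"
  then obtain P where P: "edge_disjoint_paths V E ends s t (2 * l) P"
    "\<forall>v \<in> V - {s, t}. card {i. i < 2 * l \<and> v \<in> set (fst (P i))} \<le> 2" by blast
  show "\<forall>C. C \<subseteq> V - {s, t} \<and> card C < l \<longrightarrow>
             lambda (del_verts_V V C) (del_verts_E E ends C) ends s t \<ge> enat (2 * (l - card C))"
    using rhs_to_lhs[OF assms(1) P] by blast
qed


end
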